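(* Let $4 \le p \le n-1$ and let $(i,j)\in A$. The nonnegativity constraint $x_{ij}\ge 0$ is valid for $P^p_{0,n}(D)$ and defines a facet of $P^p_{0,n}(D)$.
   Context: Let $n$ be a positive integer, $V=\{0,1,\dots,n\}$, and let $D=(V,A)$ be the digraph whose arc set $A$ consists of all ordered pairs $(i,j)$ with $i\neq j$, $i,j\in V$, except that no arc enters node $0$, no arc leaves node $n$, and the arc $(0,n)$ is absent. Nodes $1,\dots,n-1$ are called internal nodes. A $(0,n)$-$p$-path is a simple directed path in $D$ from $0$ to $n$ with exactly $p$ arcs (all nodes distinct). $P^p_{0,n}(D)\subseteq\mathbb{R}^A$ denotes the convex hull of the incidence vectors of all $(0,n)$-$p$-paths in $D$. An inequality is facet defining if it is valid for the polytope and the face it defines has dimension one less than the polytope. *)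

theory Defs
  imports "HOL-Analysis.Analysis"
begin

text \<open>Nodes form a finite type 'v with n+1 elements; s plays the role of node 0
  and t of node n. Arc vectors live in real^('v \<times> 'v); coordinates of non-arcs
  are identically 0 on all incidence vectors.\<close>

definition arcs :: "'v \<Rightarrow> 'v \<Rightarrow> ('v \<times> 'v) set" where
  "arcs s t = {(i, j). i \<noteq> j \<and> j \<noteq> s \<and> i \<noteq> t \<and> (i, j) \<noteq> (s, t)}"

definition is_p_path :: "'v \<Rightarrow> 'v \<Rightarrow> nat \<Rightarrow> 'v list \<Rightarrow> bool" where
  "is_p_path s t p vs \<longleftrightarrow> length vs = p + 1 \<and> distinct vs \<and> hd vs = s \<and> last vs = t
     \<and> (\<forall>k < p. (vs ! k, vs ! Suc k) \<in> arcs s t)"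

definition path_arcs :: "'v list \<Rightarrow> ('v \<times> 'v) set" where
  "path_arcs vs = set (zip vs (tl vs))"

definition incidence :: "'v::finite list \<Rightarrow> real ^ ('v \<times> 'v)" where
  "incidence vs = (\<chi> a. if a \<in> path_arcs vs then 1 else 0)"

definition path_polytope :: "'v::finite \<Rightarrow> 'v \<Rightarrow> nat \<Rightarrow> (real ^ ('v \<times> 'v)) set" where
  "path_polytope s t p = convex hull (incidence ` {vs. is_p_path s t p vs})"

end

theory Submission
  imports Defs
begin


definition Wl :: "('v \<times> 'v \<Rightarrow> real) \<Rightarrow> 'v list \<Rightarrow> real" where
  "Wl c xs = sum_list (map c (zip xs (tl xs)))"

lemma Wl_Nil[simp]: "Wl c [] = 0" by (simp add: Wl_def)
lemma Wl_single[simp]: "Wl c [a] = 0" by (simp add: Wl_def)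
lemma Wl_Cons2[simp]: "Wl c (a # b # xs) = c (a, b) + Wl c (b # xs)" by (simp add: Wl_def)

lemma Wl_split: "Wl c (xs @ a # ys) = Wl c (xs @ [a]) + Wl c (a # ys)"
proof (induction xs)
  case Nil then show ?case by simp
next
  case (Cons x xs) then show ?case by (cases xs) auto
qed

lemma pa_Nil[simp]: "path_arcs [] = {}" by (simp add: path_arcs_def)
lemma pa_single[simp]: "path_arcs [a] = {}" by (simp add: path_arcs_def)
lemma pa_Cons2[simp]: "path_arcs (a # b # xs) = insert (a, b) (path_arcs (b # xs))"
  by (simp add: path_arcs_def)

lemma pa_split: "path_arcs (xs @ a # ys) = path_arcs (xs @ [a]) \<union> path_arcs (a # ys)"
proof (induction xs)
  case Nil then show ?case by simp
next
  case (Cons x xs) then show ?case by (cases xs) auto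
qed

lemma pa_memD: "(a, b) \<in> path_arcs xs \<Longrightarrow> a \<in> set (butlast xs) \<and> b \<in> set (tl xs)"
proof (induction xs rule: induct_list012)
  case (3 x y zs) then show ?case by auto
qed auto

lemma pa_decomp: "(a, b) \<in> path_arcs xs \<Longrightarrow> \<exists>ys zs. xs = ys @ a # b # zs"
proof (induction xs rule: induct_list012)
  case (3 x y zs)
  show ?case
  proof (cases "(a,b) = (x,y)")
    case True then show ?thesis by (intro exI[of _ "[]"] exI[of _ zs]) auto
  next
    case False
    then have "(a,b) \<in> path_arcs (y # zs)" using 3(3) by auto
    then obtain us vs where "y # zs = us @ a # b # vs" using 3(2) by blast
    then have "x # y # zs = (x # us) @ a # b # vs" by simp
    then show ?thesis by blast
  qed
qed auto

lemma pa_in: "(a, b) \<in> path_arcs (ys @ a # b # zs)"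
  by (subst pa_split) simp

lemma fill:
  assumes "length E + m \<le> CARD('v::finite)"
  shows "\<exists>F::'v list. length F = m \<and> distinct F \<and> set F \<inter> set E = {}"
proof -
  have "card (set E) \<le> length E" by (rule card_length)
  have "card (UNIV - set E) = CARD('v) - card (set E)"
    by (simp add: card_Diff_subset)
  then have "m \<le> card (UNIV - set E)" using assms \<open>card (set E) \<le> length E\<close> by linarith
  then obtain T where T: "T \<subseteq> UNIV - set E" "card T = m" "finite T"
    by (rule obtain_subset_with_card_n)
  obtain F where "set F = T" "distinct F" using finite_distinct_list[OF T(3)] by blast
  then show ?thesis using T distinct_card[of F] by (intro exI[of _ F]) auto
qed

definition SPath :: "'v \<Rightarrow> 'v \<Rightarrow> nat \<Rightarrow> 'v \<Rightarrow> 'v \<Rightarrow> 'v list \<Rightarrow> bool" where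
  "SPath s t p i j R \<longleftrightarrow> length R = p + 1 \<and> distinct R \<and> hd R = s \<and> last R = t \<and> (i, j) \<notin> path_arcs R"
definition TPath :: "'v \<Rightarrow> 'v \<Rightarrow> nat \<Rightarrow> 'v \<Rightarrow> 'v \<Rightarrow> 'v list \<Rightarrow> bool" where
  "TPath s t p i j R \<longleftrightarrow> length R = p + 1 \<and> distinct R \<and> hd R = s \<and> last R = t \<and> (i, j) \<in> path_arcs R"

lemma is_p_path_iff:
  assumes "s \<noteq> t" "2 \<le> p"
  shows "is_p_path s t p vs \<longleftrightarrow> length vs = p + 1 \<and> distinct vs \<and> hd vs = s \<and> last vs = t"
proof
  assume "is_p_path s t p vs" then show "length vs = p + 1 \<and> distinct vs \<and> hd vs = s \<and> last vs = t"
    by (simp add: is_p_path_def)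
next
  assume H: "length vs = p + 1 \<and> distinct vs \<and> hd vs = s \<and> last vs = t"
  have s0: "vs ! 0 = s" using H by (cases vs) auto
  have tp: "vs ! p = t" using H last_conv_nth[of vs] by (cases vs) auto
  have "(vs ! k, vs ! Suc k) \<in> arcs s t" if "k < p" for k
  proof -
    have d: "\<And>a b. a < p + 1 \<Longrightarrow> b < p + 1 \<Longrightarrow> vs ! a = vs ! b \<longleftrightarrow> a = b"
      using H by (simp add: nth_eq_iff_index_eq)
    have 1: "vs ! k \<noteq> vs ! Suc k" using d[of k "Suc k"] that by simp
    have 2: "vs ! Suc k \<noteq> s" using d[of "Suc k" 0] that s0 by simp
    have 3: "vs ! k \<noteq> t" using d[of k p] that tp by simp
    have 4: "\<not> (vs ! k = s \<and> vs ! Suc k = t)"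
      using d[of k 0] d[of "Suc k" p] that s0 tp assms(2) by auto
    show ?thesis using 1 2 3 4 by (simp add: arcs_def)
  qed
  then show "is_p_path s t p vs" using H by (simp add: is_p_path_def)
qed



lemma pa_mid: "path_arcs (x # xs @ a # b # ys) = path_arcs (x # xs @ [a]) \<union> insert (a, b) (path_arcs (b # ys))"
  using pa_split[of "x # xs" a "b # ys"] by simp

locale cmb =
  fixes s t :: "'v::finite" and p :: nat and i j :: 'v and c :: "'v \<times> 'v \<Rightarrow> real" and d :: real
  assumes st: "s \<noteq> t" and p4: "4 \<le> p" and pc: "p + 2 \<le> CARD('v)" and ij: "(i, j) \<in> arcs s t"
    and HS: "\<And>R. SPath s t p i j R \<Longrightarrow> Wl c R = d"
begin

lemma ij': "i \<noteq> j" "j \<noteq> s" "i \<noteq> t" "(i, j) \<noteq> (s, t)" using ij by (auto simp: arcs_def)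

lemma SP_I:
  assumes "R = s # M @ [t]" "length M = p - 1" "distinct M" "s \<notin> set M" "t \<notin> set M"
    "(i, j) \<notin> path_arcs R"
  shows "SPath s t p i j R"
  using assms p4 st by (simp add: SPath_def)

lemma delta:
  assumes "SPath s t p i j (xs @ a # u # b # ys)" "SPath s t p i j (xs @ a # w # b # ys)"
  shows "c (a, u) + c (u, b) = c (a, w) + c (w, b)"
proof -
  have "Wl c (xs @ a # u # b # ys) = Wl c (xs @ [a]) + c (a, u) + c (u, b) + Wl c (b # ys)"
    by (subst Wl_split) simp
  moreover have "Wl c (xs @ a # w # b # ys) = Wl c (xs @ [a]) + c (a, w) + c (w, b) + Wl c (b # ys)"
    by (subst Wl_split) simp
  ultimately show ?thesis using HS[OF assms(1)] HS[OF assms(2)] by simp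
qed

lemma fillL:
  fixes E :: "'v list"
  assumes "length E + m \<le> p + 2"
  obtains F where "length F = m" "distinct F" "\<And>x. x \<in> set E \<Longrightarrow> x \<notin> set F"
proof -
  have "length E + m \<le> CARD('v)" using assms pc by linarith
  then obtain F :: "'v list" where "length F = m \<and> distinct F \<and> set F \<inter> set E = {}"
    using fill[of E m] by blast
  then show ?thesis by (intro that[of F]) auto
qed

lemma fillE:
  fixes E :: "'v list"
  assumes "length E + m \<le> p + 2"
  shows "\<exists>F. length F = m \<and> distinct F \<and> (\<forall>x\<in>set E. x \<notin> set F)"
proof -
  have "length E + m \<le> CARD('v)" using assms pc by linarith
  then obtain F :: "'v list" where "length F = m \<and> distinct F \<and> set F \<inter> set E = {}"
    using fill[of E m] by blast
  then show ?thesis by auto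
qed

lemma pick:
  fixes E :: "'v list"
  assumes "length E + 1 \<le> p + 2"
  obtains x where "x \<notin> set E"
proof -
  have "length E + 1 \<le> CARD('v)" using assms pc by linarith
  then obtain F :: "'v list" where F: "length F = 1 \<and> distinct F \<and> set F \<inter> set E = {}"
    using fill[of E 1] by blast
  then have "hd F \<notin> set E" by (cases F) auto
  then show ?thesis by (rule that)
qed

end



context cmb begin

lemma II_L1t:
  assumes "i \<noteq> s" "w \<notin> {s,t,i,j}" "w' \<notin> {s,t,i,j}" "w \<noteq> w'"
  shows "c (i, w') + c (w', t) = c (i, w) + c (w, t)"
proof -
  have "\<exists>F. length F = p - 3 \<and> distinct F \<and> (\<forall>x\<in>set [s,t,i,w',w]. x \<notin> set F)"
    by (rule fillE) (use p4 in simp)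
  then obtain F where F: "length F = p - 3" "distinct F" "s \<notin> set F" "t \<notin> set F" "i \<notin> set F"
     "w' \<notin> set F" "w \<notin> set F" by auto
  show ?thesis
  proof (rule delta[of "s # F" i w' t "[]" w])
    show "SPath s t p i j ((s # F) @ [i, w', t])"
      by (rule SP_I[where M = "F @ [i, w']"]) (use F assms ij' p4 in \<open>auto simp: pa_mid dest!: pa_memD\<close>)
    show "SPath s t p i j ((s # F) @ [i, w, t])"
      by (rule SP_I[where M = "F @ [i, w]"]) (use F assms ij' p4 in \<open>auto simp: pa_mid dest!: pa_memD\<close>)
  qed
qed

lemma II_D3:
  assumes "i \<noteq> s" "j \<noteq> t" "w \<notin> {s,t,i,j}"
  shows "c (s, w) + c (w, i) = c (s, j) + c (j, i)"
proof -
  have "\<exists>F. length F = p - 3 \<and> distinct F \<and> (\<forall>x\<in>set [s,t,w,i,j]. x \<notin> set F)"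
    by (rule fillE) (use p4 in simp)
  then obtain F where F: "length F = p - 3" "distinct F" "s \<notin> set F" "t \<notin> set F" "w \<notin> set F" "i \<notin> set F" "j \<notin> set F" by auto
  show ?thesis
  proof (rule delta[of "[]" s w i "F @ [t]" j])
    show "SPath s t p i j ([] @ s # w # i # F @ [t])"
      by (rule SP_I[where M = "w # i # F"]) (use F assms ij' p4 in \<open>auto simp: pa_mid dest!: pa_memD\<close>)
    show "SPath s t p i j ([] @ s # j # i # F @ [t])"
      by (rule SP_I[where M = "j # i # F"]) (use F assms ij' p4 in \<open>auto simp: pa_mid dest!: pa_memD\<close>)
  qed
qed

lemma II_D4:
  assumes "i \<noteq> s" "j \<noteq> t" "w \<notin> {s,t,i,j}" "x \<notin> {s,t,i,j,w}"
  shows "c (x, w) + c (w, i) = c (x, j) + c (j, i)"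
proof -
  have "\<exists>F. length F = p - 4 \<and> distinct F \<and> (\<forall>x\<in>set [s,t,x,w,i,j]. x \<notin> set F)"
    by (rule fillE) (use p4 in simp)
  then obtain F where F: "length F = p - 4" "distinct F" "s \<notin> set F" "t \<notin> set F" "x \<notin> set F" "w \<notin> set F" "i \<notin> set F" "j \<notin> set F" by auto
  show ?thesis
  proof (rule delta[of "[s]" x w i "F @ [t]" j])
    show "SPath s t p i j ([s] @ x # w # i # F @ [t])"
      by (rule SP_I[where M = "x # w # i # F"]) (use F assms ij' p4 in \<open>auto simp: pa_mid dest!: pa_memD\<close>)
    show "SPath s t p i j ([s] @ x # j # i # F @ [t])"
      by (rule SP_I[where M = "x # j # i # F"]) (use F assms ij' p4 in \<open>auto simp: pa_mid dest!: pa_memD\<close>)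
  qed
qed

lemma II_D2:
  assumes "i \<noteq> s" "j \<noteq> t" "w \<notin> {s,t,i,j}" "b \<notin> {s,t,i,j,w}"
  shows "c (s, j) + c (j, b) = c (s, w) + c (w, b)"
proof -
  have "\<exists>F. length F = p - 3 \<and> distinct F \<and> (\<forall>x\<in>set [s,t,j,b,w]. x \<notin> set F)"
    by (rule fillE) (use p4 in simp)
  then obtain F where F: "length F = p - 3" "distinct F" "s \<notin> set F" "t \<notin> set F" "j \<notin> set F" "b \<notin> set F" "w \<notin> set F" by auto
  show ?thesis
  proof (rule delta[of "[]" s j b "F @ [t]" w])
    show "SPath s t p i j ([] @ s # j # b # F @ [t])"
      by (rule SP_I[where M = "j # b # F"]) (use F assms ij' p4 in \<open>auto simp: pa_mid dest!: pa_memD\<close>)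
    show "SPath s t p i j ([] @ s # w # b # F @ [t])"
      by (rule SP_I[where M = "w # b # F"]) (use F assms ij' p4 in \<open>auto simp: pa_mid dest!: pa_memD\<close>)
  qed
qed

lemma II_D5:
  assumes "i \<noteq> s" "j \<noteq> t" "w \<notin> {s,t,i,j}" "x \<notin> {s,t,i,j,w}"
  shows "c (x, j) + c (j, t) = c (x, w) + c (w, t)"
proof -
  have "\<exists>F. length F = p - 3 \<and> distinct F \<and> (\<forall>x\<in>set [s,t,x,j,w]. x \<notin> set F)"
    by (rule fillE) (use p4 in simp)
  then obtain F where F: "length F = p - 3" "distinct F" "s \<notin> set F" "t \<notin> set F" "x \<notin> set F" "j \<notin> set F" "w \<notin> set F" by auto
  show ?thesis
  proof (rule delta[of "s # F" x j t "[]" w])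
    show "SPath s t p i j ((s # F) @ x # j # t # [])"
      by (rule SP_I[where M = "F @ [x, j]"]) (use F assms ij' p4 in \<open>auto simp: pa_mid dest!: pa_memD\<close>)
    show "SPath s t p i j ((s # F) @ x # w # t # [])"
      by (rule SP_I[where M = "F @ [x, w]"]) (use F assms ij' p4 in \<open>auto simp: pa_mid dest!: pa_memD\<close>)
  qed
qed

lemma I_L1:
  assumes "i = s" "w \<notin> {s,t,j}" "w' \<notin> {s,t,j,w}" "b \<notin> {s,t,j,w,w'}"
  shows "c (s, w') + c (w', b) = c (s, w) + c (w, b)"
proof -
  have "\<exists>F. length F = p - 3 \<and> distinct F \<and> (\<forall>x\<in>set [s,t,w',b,w]. x \<notin> set F)"
    by (rule fillE) (use p4 in simp)
  then obtain F where F: "length F = p - 3" "distinct F" "s \<notin> set F" "t \<notin> set F" "w' \<notin> set F" "b \<notin> set F" "w \<notin> set F" by auto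
  show ?thesis
  proof (rule delta[of "[]" s w' b "F @ [t]" w])
    show "SPath s t p i j ([] @ s # w' # b # F @ [t])"
      by (rule SP_I[where M = "w' # b # F"]) (use F assms ij' p4 in \<open>auto simp: pa_mid dest!: pa_memD\<close>)
    show "SPath s t p i j ([] @ s # w # b # F @ [t])"
      by (rule SP_I[where M = "w # b # F"]) (use F assms ij' p4 in \<open>auto simp: pa_mid dest!: pa_memD\<close>)
  qed
qed

lemma I_L2:
  assumes "i = s" "w \<notin> {s,t,j}" "x \<notin> {s,t,j,w}"
  shows "c (x, w) + c (w, t) = c (x, j) + c (j, t)"
proof -
  have "\<exists>F. length F = p - 3 \<and> distinct F \<and> (\<forall>x\<in>set [s,t,x,w,j]. x \<notin> set F)"
    by (rule fillE) (use p4 in simp)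
  then obtain F where F: "length F = p - 3" "distinct F" "s \<notin> set F" "t \<notin> set F" "x \<notin> set F" "w \<notin> set F" "j \<notin> set F" by auto
  show ?thesis
  proof (rule delta[of "s # F" x w t "[]" j])
    show "SPath s t p i j ((s # F) @ x # w # t # [])"
      by (rule SP_I[where M = "F @ [x, w]"]) (use F assms ij' p4 in \<open>auto simp: pa_mid dest!: pa_memD\<close>)
    show "SPath s t p i j ((s # F) @ x # j # t # [])"
      by (rule SP_I[where M = "F @ [x, j]"]) (use F assms ij' p4 in \<open>auto simp: pa_mid dest!: pa_memD\<close>)
  qed
qed

lemma I_L3:
  assumes "i = s" "w \<notin> {s,t,j}" "b \<notin> {s,t,j,w}" "x \<notin> {s,t,j,w,b}"
  shows "c (x, j) + c (j, b) = c (x, w) + c (w, b)"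
proof -
  have "\<exists>F. length F = p - 4 \<and> distinct F \<and> (\<forall>x\<in>set [s,t,x,j,b,w]. x \<notin> set F)"
    by (rule fillE) (use p4 in simp)
  then obtain F where F: "length F = p - 4" "distinct F" "s \<notin> set F" "t \<notin> set F" "x \<notin> set F" "j \<notin> set F" "b \<notin> set F" "w \<notin> set F" by auto
  show ?thesis
  proof (rule delta[of "s # F" x j b "[t]" w])
    show "SPath s t p i j ((s # F) @ x # j # b # [t])"
      by (rule SP_I[where M = "F @ [x, j, b]"]) (use F assms ij' p4 in \<open>auto simp: pa_mid dest!: pa_memD\<close>)
    show "SPath s t p i j ((s # F) @ x # w # b # [t])"
      by (rule SP_I[where M = "F @ [x, w, b]"]) (use F assms ij' p4 in \<open>auto simp: pa_mid dest!: pa_memD\<close>)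
  qed
qed

lemma III_L2:
  assumes "j = t" "w \<notin> {s,t,i}" "x \<notin> {s,t,i,w}"
  shows "c (s, w) + c (w, x) = c (s, i) + c (i, x)"
proof -
  have "\<exists>F. length F = p - 3 \<and> distinct F \<and> (\<forall>x\<in>set [s,t,w,x,i]. x \<notin> set F)"
    by (rule fillE) (use p4 in simp)
  then obtain F where F: "length F = p - 3" "distinct F" "s \<notin> set F" "t \<notin> set F" "w \<notin> set F" "x \<notin> set F" "i \<notin> set F" by auto
  show ?thesis
  proof (rule delta[of "[]" s w x "F @ [t]" i])
    show "SPath s t p i j ([] @ s # w # x # F @ [t])"
      by (rule SP_I[where M = "w # x # F"]) (use F assms ij' p4 in \<open>auto simp: pa_mid dest!: pa_memD\<close>)
    show "SPath s t p i j ([] @ s # i # x # F @ [t])"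
      by (rule SP_I[where M = "i # x # F"]) (use F assms ij' p4 in \<open>auto simp: pa_mid dest!: pa_memD\<close>)
  qed
qed

lemma III_L3:
  assumes "j = t" "w \<notin> {s,t,i}" "b \<notin> {s,t,i,w}" "x \<notin> {s,t,i,w,b}"
  shows "c (b, i) + c (i, x) = c (b, w) + c (w, x)"
proof -
  have "\<exists>F. length F = p - 4 \<and> distinct F \<and> (\<forall>x\<in>set [s,t,b,i,x,w]. x \<notin> set F)"
    by (rule fillE) (use p4 in simp)
  then obtain F where F: "length F = p - 4" "distinct F" "s \<notin> set F" "t \<notin> set F" "b \<notin> set F" "i \<notin> set F" "x \<notin> set F" "w \<notin> set F" by auto
  show ?thesis
  proof (rule delta[of "[s]" b i x "F @ [t]" w])
    show "SPath s t p i j ([s] @ b # i # x # F @ [t])"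
      by (rule SP_I[where M = "b # i # x # F"]) (use F assms ij' p4 in \<open>auto simp: pa_mid dest!: pa_memD\<close>)
    show "SPath s t p i j ([s] @ b # w # x # F @ [t])"
      by (rule SP_I[where M = "b # w # x # F"]) (use F assms ij' p4 in \<open>auto simp: pa_mid dest!: pa_memD\<close>)
  qed
qed

lemma III_L1:
  assumes "j = t" "w \<notin> {s,t,i}" "w' \<notin> {s,t,i,w}" "x \<notin> {s,t,i,w,w'}"
  shows "c (x, w') + c (w', t) = c (x, w) + c (w, t)"
proof -
  have "\<exists>F. length F = p - 3 \<and> distinct F \<and> (\<forall>x\<in>set [s,t,x,w',w]. x \<notin> set F)"
    by (rule fillE) (use p4 in simp)
  then obtain F where F: "length F = p - 3" "distinct F" "s \<notin> set F" "t \<notin> set F" "x \<notin> set F" "w' \<notin> set F" "w \<notin> set F" by auto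
  show ?thesis
  proof (rule delta[of "s # F" x w' t "[]" w])
    show "SPath s t p i j ((s # F) @ x # w' # t # [])"
      by (rule SP_I[where M = "F @ [x, w']"]) (use F assms ij' p4 in \<open>auto simp: pa_mid dest!: pa_memD\<close>)
    show "SPath s t p i j ((s # F) @ x # w # t # [])"
      by (rule SP_I[where M = "F @ [x, w]"]) (use F assms ij' p4 in \<open>auto simp: pa_mid dest!: pa_memD\<close>)
  qed
qed

end


context cmb begin

lemma pick5:
  obtains x where "x \<notin> set [a1, a2, a3, a4, a5 :: 'v]"
proof -
  have "length [a1, a2, a3, a4, a5] + 1 \<le> p + 2" using p4 by simp
  then show ?thesis using pick that by blast
qed

lemma II_K:
  assumes "i \<noteq> s" "j \<noteq> t" "w \<notin> {s,t,i,j}" "b \<notin> {s,i,j,w}"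
  shows "c (j, b) - c (w, b) = c (s, w) - c (s, j)"
proof (cases "b = t")
  case True
  obtain x where x: "x \<notin> set [s,t,i,j,w]" by (rule pick5)
  have "c (x, j) + c (j, t) = c (x, w) + c (w, t)" by (rule II_D5) (use assms x st in auto)
  moreover have "c (s, w) + c (w, i) = c (s, j) + c (j, i)" by (rule II_D3) (use assms x st in auto)
  moreover have "c (x, w) + c (w, i) = c (x, j) + c (j, i)" by (rule II_D4) (use assms x st in auto)
  ultimately show ?thesis unfolding True by linarith
next
  case False
  have "c (s, j) + c (j, b) = c (s, w) + c (w, b)" by (rule II_D2) (use assms False st in auto)
  then show ?thesis by linarith
qed

lemma II_H:
  assumes "i \<noteq> s" "j \<noteq> t" "w \<notin> {s,t,i,j}" "w' \<notin> {s,t,i,j}"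
  shows "c (s, w) - c (i, w) = c (s, w') - c (i, w')"
proof (cases "w = w'")
  case False
  have "c (i, w') + c (w', t) = c (i, w) + c (w, t)" by (rule II_L1t) (use assms False st st in auto)
  moreover have "c (j, t) - c (w, t) = c (s, w) - c (s, j)" by (rule II_K) (use assms ij' st in auto)
  moreover have "c (j, t) - c (w', t) = c (s, w') - c (s, j)" by (rule II_K) (use assms ij' st in auto)
  ultimately show ?thesis by linarith
qed simp

lemma I_K:
  assumes "i = s" "w \<notin> {s,t,j}" "b \<notin> {s,t,j,w}"
  shows "c (j, b) - c (w, b) = c (j, t) - c (w, t)"
proof -
  obtain x where x: "x \<notin> set [s,t,j,w,b]" by (rule pick5)
  have "c (x, j) + c (j, b) = c (x, w) + c (w, b)" by (rule I_L3) (use assms x st in auto)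
  moreover have "c (x, w) + c (w, t) = c (x, j) + c (j, t)" by (rule I_L2) (use assms x st in auto)
  ultimately show ?thesis by linarith
qed

lemma I_H:
  assumes "i = s" "w \<notin> {s,t,j}" "w' \<notin> {s,t,j}"
  shows "c (w, t) + c (s, w) = c (w', t) + c (s, w')"
proof (cases "w = w'")
  case False
  obtain b where b: "b \<notin> set [s,t,j,w,w']" by (rule pick5)
  have "c (s, w') + c (w', b) = c (s, w) + c (w, b)" by (rule I_L1) (use assms b False st in auto)
  moreover have "c (j, b) - c (w, b) = c (j, t) - c (w, t)" by (rule I_K) (use assms b st in auto)
  moreover have "c (j, b) - c (w', b) = c (j, t) - c (w', t)" by (rule I_K) (use assms b st in auto)
  ultimately show ?thesis by linarith
qed simp

lemma III_K:
  assumes "j = t" "w \<notin> {s,t,i}" "b \<notin> {s,t,i,w}"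
  shows "c (b, i) - c (b, w) = c (s, i) - c (s, w)"
proof -
  obtain x where x: "x \<notin> set [s,t,i,w,b]" by (rule pick5)
  have "c (b, i) + c (i, x) = c (b, w) + c (w, x)" by (rule III_L3) (use assms x st in auto)
  moreover have "c (s, w) + c (w, x) = c (s, i) + c (i, x)" by (rule III_L2) (use assms x st in auto)
  ultimately show ?thesis by linarith
qed

lemma III_H:
  assumes "j = t" "w \<notin> {s,t,i}" "w' \<notin> {s,t,i}"
  shows "c (s, w) + c (w, t) = c (s, w') + c (w', t)"
proof (cases "w = w'")
  case False
  obtain x where x: "x \<notin> set [s,t,i,w,w']" by (rule pick5)
  have "c (x, w') + c (w', t) = c (x, w) + c (w, t)" by (rule III_L1) (use assms x False st in auto)
  moreover have "c (x, i) - c (x, w) = c (s, i) - c (s, w)" by (rule III_K) (use assms x st in auto)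
  moreover have "c (x, i) - c (x, w') = c (s, i) - c (s, w')" by (rule III_K) (use assms x st in auto)
  ultimately show ?thesis by linarith
qed simp

lemma spare:
  fixes Q :: "'v list"
  assumes "length Q = p + 1"
  obtains w where "w \<notin> set Q"
proof -
  have "card (set Q) \<le> p + 1" using card_length[of Q] assms by simp
  moreover have "set Q = UNIV \<Longrightarrow> CARD('v) = card (set Q)" by simp
  ultimately have "set Q \<noteq> UNIV" using pc by linarith
  then show ?thesis using that by blast
qed

end


lemma pa_memS: "(a, b) \<in> path_arcs xs \<Longrightarrow> a \<in> set xs \<and> b \<in> set xs"
proof (induction xs rule: induct_list012)
  case (3 x y zs) then show ?case by auto
qed auto

context cmb begin

lemma T_j:
  assumes T: "TPath s t p i j Q" and jt: "j \<noteq> t"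
  obtains b w where "Wl c Q = d + c (i, j) + c (j, b) - c (i, w) - c (w, b)"
    "b \<notin> {s, i, j, w}" "w \<notin> {s, t, i, j}" "i = s \<Longrightarrow> b \<noteq> t"
proof -
  have Q: "length Q = p + 1" "distinct Q" "hd Q = s" "last Q = t" "(i, j) \<in> path_arcs Q"
    using T by (auto simp: TPath_def)
  obtain ys zs where Qd: "Q = ys @ i # j # zs" using pa_decomp[OF Q(5)] by blast
  have "zs \<noteq> []" using Q(4) Qd jt by auto
  then obtain b zs' where zs: "zs = b # zs'" by (cases zs) auto
  obtain w where w: "w \<notin> set Q" using spare[OF Q(1)] by blast
  have sQ: "s \<in> set Q" "t \<in> set Q" using Q by (cases Q; auto)+
  have dQ: "distinct (ys @ i # j # b # zs')" using Q(2) Qd zs by simp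
  have bs: "b \<noteq> s"
  proof
    assume "b = s"
    show False
    proof (cases ys)
      case Nil then show False using Q(3) Qd zs dQ \<open>b = s\<close> by auto
    next
      case (Cons y ys') then show False using Q(3) Qd zs dQ \<open>b = s\<close> by auto
    qed
  qed
  let ?R = "ys @ i # w # b # zs'"
  have SR: "SPath s t p i j ?R"
    unfolding SPath_def
  proof (intro conjI)
    show "length ?R = p + 1" using Q(1) Qd zs by simp
    show "distinct ?R" using dQ w Qd zs by auto
    show "hd ?R = s" using Q(3) Qd zs by (cases ys) auto
    show "last ?R = t" using Q(4) Qd zs by simp
    show "(i, j) \<notin> path_arcs ?R"
    proof
      assume "(i, j) \<in> path_arcs ?R"
      then have "j \<in> set ?R" using pa_memS[of i j ?R] by blast
      then show False using dQ w Qd zs by auto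
    qed
  qed
  have "Wl c Q = Wl c (ys @ [i]) + c (i, j) + c (j, b) + Wl c (b # zs')"
    unfolding Qd zs by (subst Wl_split) simp
  moreover have "Wl c ?R = Wl c (ys @ [i]) + c (i, w) + c (w, b) + Wl c (b # zs')"
    by (subst Wl_split) simp
  ultimately have "Wl c Q = d + c (i, j) + c (j, b) - c (i, w) - c (w, b)"
    using HS[OF SR] by simp
  moreover have "b \<notin> {s, i, j, w}" using bs dQ w Qd zs by auto
  moreover have "w \<notin> {s, t, i, j}" using w sQ Qd by auto
  moreover have "b \<noteq> t" if "i = s"
  proof
    assume bt: "b = t"
    have "ys = []"
    proof (rule ccontr)
      assume "ys \<noteq> []"
      then have "hd ys = s" "hd ys \<in> set ys" using Q(3) Qd by auto
      then show False using dQ that by auto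
    qed
    moreover have "zs' = []"
    proof (rule ccontr)
      assume "zs' \<noteq> []"
      then have "last zs' = t" "last zs' \<in> set zs'" using Q(4) Qd zs by auto
      then show False using dQ bt by auto
    qed
    ultimately show False using Q(1) Qd zs p4 by simp
  qed
  ultimately show ?thesis using that by blast
qed

lemma T_t:
  assumes T: "TPath s t p i j Q" and jt: "j = t"
  obtains x w where "Wl c Q = d + c (i, t) + c (x, i) - c (x, w) - c (w, t)"
    "x \<notin> {s, t, i, w}" "w \<notin> {s, t, i}"
proof -
  have Q: "length Q = p + 1" "distinct Q" "hd Q = s" "last Q = t" "(i, j) \<in> path_arcs Q"
    using T by (auto simp: TPath_def)
  have is': "i \<noteq> s" using ij' jt by auto
  obtain ys zs where Qd: "Q = ys @ i # t # zs" using pa_decomp[OF Q(5)] jt by blast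
  have "zs = []"
  proof (rule ccontr)
    assume "zs \<noteq> []"
    then have "last zs = t" "last zs \<in> set zs" using Q(4) Qd by auto
    then show False using Q(2) Qd by auto
  qed
  have "ys \<noteq> []" using Q(3) Qd is' by auto
  then obtain ys' x where ys: "ys = ys' @ [x]" by (cases ys rule: rev_exhaust) auto
  have dQ: "distinct (ys' @ x # i # t # [])" using Q(2) Qd ys \<open>zs = []\<close> by simp
  have Qe: "Q = ys' @ x # i # t # []" using Qd ys \<open>zs = []\<close> by simp
  obtain w where w: "w \<notin> set Q" using spare[OF Q(1)] by blast
  have sQ: "s \<in> set Q" "t \<in> set Q" using Q by (cases Q; auto)+
  have xs: "x \<noteq> s"
  proof
    assume "x = s"
    have "ys' = []"
    proof (rule ccontr)
      assume "ys' \<noteq> []"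
      then have "hd ys' = s" "hd ys' \<in> set ys'" using Q(3) Qe by auto
      then show False using dQ \<open>x = s\<close> by auto
    qed
    then show False using Q(1) Qe p4 by simp
  qed
  let ?R = "ys' @ x # w # t # []"
  have SR: "SPath s t p i j ?R"
    unfolding SPath_def
  proof (intro conjI)
    show "length ?R = p + 1" using Q(1) Qe by simp
    show "distinct ?R" using dQ w Qe by auto
    show "hd ?R = s" using Q(3) Qe by (cases ys') auto
    show "last ?R = t" by simp
    show "(i, j) \<notin> path_arcs ?R"
    proof
      assume "(i, j) \<in> path_arcs ?R"
      then have "i \<in> set ?R" using pa_memS[of i j ?R] by blast
      then show False using dQ w Qe by auto
    qed
  qed
  have "Wl c Q = Wl c (ys' @ [x]) + c (x, i) + c (i, t)"
    unfolding Qe by (subst Wl_split) simp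
  moreover have "Wl c ?R = Wl c (ys' @ [x]) + c (x, w) + c (w, t)"
    by (subst Wl_split) simp
  ultimately have "Wl c Q = d + c (i, t) + c (x, i) - c (x, w) - c (w, t)"
    using HS[OF SR] by simp
  moreover have "x \<notin> {s, t, i, w}" using xs dQ w Qe by auto
  moreover have "w \<notin> {s, t, i}" using w sQ Qe by auto
  ultimately show ?thesis using that by blast
qed

lemma T_const:
  assumes "TPath s t p i j Q" "TPath s t p i j Q'"
  shows "Wl c Q = Wl c Q'"
proof (cases "j = t")
  case True
  obtain x w where 1: "Wl c Q = d + c (i, t) + c (x, i) - c (x, w) - c (w, t)"
    "x \<notin> {s, t, i, w}" "w \<notin> {s, t, i}" using T_t[OF assms(1) True] by blast
  obtain x' w' where 2: "Wl c Q' = d + c (i, t) + c (x', i) - c (x', w') - c (w', t)"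
    "x' \<notin> {s, t, i, w'}" "w' \<notin> {s, t, i}" using T_t[OF assms(2) True] by blast
  have "c (x, i) - c (x, w) = c (s, i) - c (s, w)" by (rule III_K) (use True 1 in auto)
  moreover have "c (x', i) - c (x', w') = c (s, i) - c (s, w')" by (rule III_K) (use True 2 in auto)
  moreover have "c (s, w) + c (w, t) = c (s, w') + c (w', t)" by (rule III_H) (use True 1 2 in auto)
  ultimately show ?thesis using 1(1) 2(1) by linarith
next
  case False
  obtain b w where 1: "Wl c Q = d + c (i, j) + c (j, b) - c (i, w) - c (w, b)"
    "b \<notin> {s, i, j, w}" "w \<notin> {s, t, i, j}" "i = s \<Longrightarrow> b \<noteq> t" using T_j[OF assms(1) False] by blast
  obtain b' w' where 2: "Wl c Q' = d + c (i, j) + c (j, b') - c (i, w') - c (w', b')"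
    "b' \<notin> {s, i, j, w'}" "w' \<notin> {s, t, i, j}" "i = s \<Longrightarrow> b' \<noteq> t" using T_j[OF assms(2) False] by blast
  show ?thesis
  proof (cases "i = s")
    case True
    have "c (j, b) - c (w, b) = c (j, t) - c (w, t)" by (rule I_K) (use True 1 in auto)
    moreover have "c (j, b') - c (w', b') = c (j, t) - c (w', t)" by (rule I_K) (use True 2 in auto)
    moreover have "c (w, t) + c (s, w) = c (w', t) + c (s, w')" by (rule I_H) (use True 1 2 in auto)
    ultimately show ?thesis using 1(1) 2(1) True by simp
  next
    case ns: False
    have "c (j, b) - c (w, b) = c (s, w) - c (s, j)" by (rule II_K) (use ns False 1 in auto)
    moreover have "c (j, b') - c (w', b') = c (s, w') - c (s, j)" by (rule II_K) (use ns False 2 in auto)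
    moreover have "c (s, w) - c (i, w) = c (s, w') - c (i, w')" by (rule II_H) (use ns False 1 2 in auto)
    ultimately show ?thesis using 1(1) 2(1) by linarith
  qed
qed

end


lemma inc_nth: "incidence vs $ a = (if a \<in> path_arcs vs then 1 else 0)"
  by (simp add: incidence_def)

lemma inner_inc:
  fixes vs :: "'v::finite list" and c :: "real ^ ('v \<times> 'v)"
  assumes "distinct vs"
  shows "inner c (incidence vs) = Wl (\<lambda>a. c $ a) vs"
proof -
  have "inner c (incidence vs) = (\<Sum>a\<in>UNIV. c $ a * incidence vs $ a)"
    by (simp add: inner_vec_def)
  also have "\<dots> = (\<Sum>a\<in>UNIV. if a \<in> path_arcs vs then c $ a else 0)"
    by (rule sum.cong) (auto simp: inc_nth)
  also have "\<dots> = (\<Sum>a\<in>UNIV \<inter> path_arcs vs. c $ a)"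
    by (rule sum.inter_restrict[symmetric]) simp
  also have "\<dots> = (\<Sum>a\<in>set (zip vs (tl vs)). c $ a)" by (simp add: path_arcs_def)
  also have "\<dots> = sum_list (map (\<lambda>a. c $ a) (zip vs (tl vs)))"
    by (rule sum.distinct_set_conv_list) (rule distinct_zipI1[OF assms])
  finally show ?thesis by (simp add: Wl_def)
qed

lemma sep:
  fixes S :: "'a::euclidean_space set"
  assumes "a0 \<in> S" "z \<notin> affine hull S"
  obtains c where "\<And>x. x \<in> affine hull S \<Longrightarrow> inner c x = inner c a0" "inner c z \<noteq> inner c a0"
proof -
  let ?B = "(\<lambda>x. -a0 + x) ` (S - {a0})"
  have AH: "affine hull S = (\<lambda>x. a0 + x) ` span ?B" by (rule affine_hull_span2[OF assms(1)])
  obtain y zz where y: "y \<in> span ?B" and orth: "\<And>w. w \<in> span ?B \<Longrightarrow> orthogonal zz w"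
    and dec: "z - a0 = y + zz"
    using orthogonal_subspace_decomp_exists[of ?B "z - a0"] by metis
  show ?thesis
  proof (rule that[of zz])
    fix x assume "x \<in> affine hull S"
    then obtain v where v: "v \<in> span ?B" "x = a0 + v" using AH by auto
    then show "inner zz x = inner zz a0" using orth[OF v(1)] by (simp add: orthogonal_def inner_add_right)
  next
    have "zz \<noteq> 0"
    proof
      assume "zz = 0"
      then have "z = a0 + y" using dec by (simp add: algebra_simps)
      then have "z \<in> affine hull S" using AH y by auto
      then show False using assms(2) by simp
    qed
    have "inner zz y = 0" using orth[OF y] by (simp add: orthogonal_def)
    have "z = a0 + (y + zz)" using dec by (simp add: algebra_simps)
    then have "inner zz z = inner zz a0 + inner zz y + inner zz zz" by (simp add: inner_add_right)
    then show "inner zz z \<noteq> inner zz a0" using \<open>inner zz y = 0\<close> \<open>zz \<noteq> 0\<close> by simp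
  qed
qed

lemma T_exists:
  fixes s t i j :: "'v::finite"
  assumes st: "s \<noteq> t" and p4: "4 \<le> p" and pc: "p + 2 \<le> CARD('v)" and ij: "(i, j) \<in> arcs s t"
  shows "\<exists>Q. TPath s t p i j Q"
proof -
  have ij': "i \<noteq> j" "j \<noteq> s" "i \<noteq> t" "(i, j) \<noteq> (s, t)" using ij by (auto simp: arcs_def)
  show ?thesis
  proof (cases "i = s")
    case True
    obtain F :: "'v list" where F: "length F = p - 2 \<and> distinct F \<and> set F \<inter> set [s,t,j] = {}"
      using fill[of "[s,t,j]" "p - 2"] pc p4 by force
    have "TPath s t p i j (s # j # F @ [t])" using F True ij' st p4 by (auto simp: TPath_def)
    then show ?thesis by blast
  next
    case False
    show ?thesis
    proof (cases "j = t")
      case True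
      obtain F :: "'v list" where F: "length F = p - 2 \<and> distinct F \<and> set F \<inter> set [s,t,i] = {}"
        using fill[of "[s,t,i]" "p - 2"] pc p4 by force
      have "TPath s t p i j (s # F @ [i, t])" using F True False ij' st p4
        by (auto simp: TPath_def pa_mid)
      then show ?thesis by blast
    next
      case jt: False
      obtain F :: "'v list" where F: "length F = p - 3 \<and> distinct F \<and> set F \<inter> set [s,t,i,j] = {}"
        using fill[of "[s,t,i,j]" "p - 3"] pc p4 by force
      have "TPath s t p i j (s # i # j # F @ [t])" using F jt False ij' st p4 by (auto simp: TPath_def)
      then show ?thesis by blast
    qed
  qed
qed



theorem theorem10:
  fixes s t :: "'v::finite" and p :: nat and i j :: 'v
  assumes "s \<noteq> t"
    and "4 \<le> p" and "p \<le> CARD('v) - 2"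
    and "(i, j) \<in> arcs s t"
  shows "(\<forall>x \<in> path_polytope s t p. x $ (i, j) \<ge> 0)
    \<and> aff_dim {x \<in> path_polytope s t p. x $ (i, j) = 0} = aff_dim (path_polytope s t p) - 1"
proof -
  note st = assms(1) and p4 = assms(2) and ij = assms(4)
  have pc: "p + 2 \<le> CARD('v)" using assms(2,3) by linarith
  define X where "X = incidence ` {vs. SPath s t p i j vs}"
  define Y where "Y = incidence ` {vs. TPath s t p i j vs}"
  have paths: "{vs. is_p_path s t p vs} = {vs. SPath s t p i j vs} \<union> {vs. TPath s t p i j vs}"
    using is_p_path_iff[OF st, of p] p4 by (auto simp: SPath_def TPath_def)
  have P: "path_polytope s t p = convex hull (X \<union> Y)"
    unfolding path_polytope_def paths X_def Y_def by (simp add: image_Un)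
  define P where "P = path_polytope s t p"
  define Fc where "Fc = {x \<in> P. x $ (i, j) = 0}"
  have nonneg: "\<forall>x \<in> P. x $ (i, j) \<ge> 0"
  proof -
    have cv: "convex {x :: real ^ ('v \<times> 'v). 0 \<le> x $ (i, j)}"
      unfolding convex_def by simp
    have "X \<union> Y \<subseteq> {x. 0 \<le> x $ (i, j)}" unfolding X_def Y_def by (auto simp: inc_nth)
    then have "convex hull (X \<union> Y) \<subseteq> {x. 0 \<le> x $ (i, j)}" using cv by (rule hull_minimal)
    then show ?thesis unfolding P_def P by auto
  qed
  obtain Q0 where Q0: "TPath s t p i j Q0" using T_exists[OF st p4 pc ij] by blast
  define y0 where "y0 = incidence Q0"
  have y0Y: "y0 \<in> Y" unfolding y0_def Y_def using Q0 by blast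
  have y0c: "y0 $ (i, j) = 1" using Q0 by (simp add: y0_def inc_nth TPath_def)
  have y0P: "y0 \<in> P" unfolding P_def P using y0Y by (simp add: hull_inc)
  have XF: "X \<subseteq> Fc"
  proof
    fix x assume "x \<in> X"
    then have "x \<in> P" unfolding P_def P by (simp add: hull_inc)
    moreover have "x $ (i, j) = 0" using \<open>x \<in> X\<close> unfolding X_def by (auto simp: inc_nth SPath_def)
    ultimately show "x \<in> Fc" unfolding Fc_def by simp
  qed
  have HA: "affine {x :: real ^ ('v \<times> 'v). x $ (i, j) = 0}"
    unfolding affine_def by (simp add: algebra_simps)
  have FH: "affine hull Fc \<subseteq> {x. x $ (i, j) = 0}"
    by (rule hull_minimal) (use HA in \<open>auto simp: Fc_def\<close>)
  have lt: "aff_dim Fc < aff_dim P"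
  proof (rule aff_dim_psubset)
    have "affine hull Fc \<subseteq> affine hull P" by (rule hull_mono) (auto simp: Fc_def)
    moreover have "y0 \<in> affine hull P" using y0P by (simp add: hull_inc)
    moreover have "y0 \<notin> affine hull Fc" using FH y0c by auto
    ultimately show "affine hull Fc \<subset> affine hull P" by blast
  qed
  define A where "A = affine hull (insert y0 X)"
  have YA: "Y \<subseteq> A"
  proof
    fix y assume "y \<in> Y"
    then obtain Q where Q: "TPath s t p i j Q" "y = incidence Q" unfolding Y_def by blast
    show "y \<in> A"
    proof (rule ccontr)
      assume "y \<notin> A"
      then obtain c where c: "\<And>x. x \<in> A \<Longrightarrow> inner c x = inner c y0" "inner c y \<noteq> inner c y0"
        using sep[of y0 "insert y0 X" y] unfolding A_def by blast
      interpret cmb s t p i j "\<lambda>a. c $ a" "inner c y0"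
      proof
        show "s \<noteq> t" "4 \<le> p" "p + 2 \<le> CARD('v)" "(i, j) \<in> arcs s t" by fact+
        fix R assume R: "SPath s t p i j R"
        have "incidence R \<in> A" unfolding A_def X_def using R by (intro hull_inc) blast
        then have "inner c (incidence R) = inner c y0" by (rule c(1))
        then show "Wl (\<lambda>a. c $ a) R = inner c y0"
          using inner_inc[of R c] R by (simp add: SPath_def)
      qed
      have "Wl (\<lambda>a. c $ a) Q = Wl (\<lambda>a. c $ a) Q0" by (rule T_const[OF Q(1) Q0])
      then have "inner c y = inner c y0"
        using inner_inc[of Q c] inner_inc[of Q0 c] Q Q0 by (simp add: y0_def TPath_def)
      then show False using c(2) by simp
    qed
  qed
  have "X \<subseteq> A" unfolding A_def by (meson hull_subset insert_subset order_trans subset_insertI)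
  then have "X \<union> Y \<subseteq> A" using YA by blast
  moreover have "convex A" unfolding A_def by (simp add: affine_imp_convex)
  ultimately have "P \<subseteq> A" unfolding P_def P by (rule hull_minimal)
  then have "aff_dim P \<le> aff_dim A" by (rule aff_dim_subset)
  also have "\<dots> = aff_dim (insert y0 X)" unfolding A_def by simp
  also have "\<dots> \<le> aff_dim X + 1" by (simp add: aff_dim_insert)
  also have "\<dots> \<le> aff_dim Fc + 1" using aff_dim_subset[OF XF] by simp
  finally have "aff_dim P \<le> aff_dim Fc + 1" .
  then have "aff_dim Fc = aff_dim P - 1" using lt by linarith
  then show ?thesis using nonneg unfolding P_def Fc_def by simp
qed

end
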